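(* Consider the UAV Persistent Service model with parameters $f>0$, $c\ge0$ and displacement times $g_1,\dots,g_N>0$ with $2g_i<f$, and let $\bar g=\frac1N\sum_{i=1}^N g_i$. Let $M_{het}$ be the minimum number of UAVs of a feasible schedule for these heterogeneous displacement times, and let $M_{hom}=N+\left\lceil\frac{c+2\bar g}{f-2\bar g}N\right\rceil$ be the minimum number of UAVs of a feasible schedule in the homogeneous instance with the same $f,c,N$ and all displacement times equal to $\bar g$. Then $M_{het}\ge M_{hom}$.
   Context: UAV Persistent Service model: there is a single recharging station (RS) and a finite set of $N$ aerial locations, served by identical UAVs. A UAV with a full battery can fly for at most $f$ time units; replacing/recharging its battery at the RS takes $c$ time units. Flying between the RS and location $i$ (either direction) takes $g_i$ time units. A UAV's activity consists of sorties: it leaves the RS fully charged, flies to one location, stays there (covering it), and flies back to the RS, with total airborne time of the sortie at most $f$; it then spends $c$ time units recharging at the RS (possibly followed by idle time) before its next sortie. At time $0$ each UAV is fully charged, either at the RS or at a location. A location is covered at time $t$ if some UAV is present at it at time $t$. A schedule is feasible if every location is covered at every time $t\ge0$. *)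

theory Defs
  imports Complex_Main
begin

text \<open>
A sortie is encoded as (i, a, l): the UAV serves location i, arriving there at
time a and leaving at time l; it departs the RS at a - g i and returns at l + g i.
A UAV plan is (at0, s): at0 says the UAV is at a location at time 0 (then its
first sortie starts at that location with a = 0, airborne from time 0);
s k is the k-th sortie (None = no more sorties; sorties form a prefix).
\<close>

type_synonym sortie = "nat \<times> real \<times> real"
type_synonym uav_plan = "bool \<times> (nat \<Rightarrow> sortie option)"

definition valid_uav ::
  "(nat \<Rightarrow> real) \<Rightarrow> real \<Rightarrow> real \<Rightarrow> nat \<Rightarrow> uav_plan \<Rightarrow> bool" where
  "valid_uav g f c N P \<longleftrightarrow>
     (let at0 = fst P; s = snd P in
       (\<forall>k. s (Suc k) \<noteq> None \<longrightarrow> s k \<noteq> None) \<and>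
       (at0 \<longrightarrow> s 0 \<noteq> None) \<and>
       (\<forall>k i a l. s k = Some (i, a, l) \<longrightarrow>
          i < N \<and> a \<le> l \<and>
          (if k = 0 \<and> at0 then a = 0 \<and> l + g i \<le> f
           else 0 \<le> a - g i \<and> (l + g i) - (a - g i) \<le> f)) \<and>
       (\<forall>k i a l i' a' l'. s k = Some (i, a, l) \<longrightarrow> s (Suc k) = Some (i', a', l') \<longrightarrow>
          l + g i + c \<le> a' - g i'))"

definition present :: "uav_plan \<Rightarrow> nat \<Rightarrow> real \<Rightarrow> bool" where
  "present P i t \<longleftrightarrow> (\<exists>k a l. snd P k = Some (i, a, l) \<and> a \<le> t \<and> t \<le> l)"

definition feasible ::
  "(nat \<Rightarrow> real) \<Rightarrow> real \<Rightarrow> real \<Rightarrow> nat \<Rightarrow> nat \<Rightarrow> (nat \<Rightarrow> uav_plan) \<Rightarrow> bool" where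
  "feasible g f c N M U \<longleftrightarrow>
     (\<forall>u<M. valid_uav g f c N (U u)) \<and>
     (\<forall>i<N. \<forall>t\<ge>0. \<exists>u<M. present (U u) i t)"

definition M_hom :: "real \<Rightarrow> real \<Rightarrow> nat \<Rightarrow> real \<Rightarrow> nat" where
  "M_hom f c N gbar = N + nat \<lceil>(c + 2 * gbar) / (f - 2 * gbar) * real N\<rceil>"

end

theory Submission
  imports Defs "HOL-Analysis.Analysis"
begin


lemma cover_len:
  fixes T :: real and \<alpha> \<beta> :: "'a \<Rightarrow> real"
  assumes fin: "finite F" and T: "T \<ge> 0" and ab: "\<forall>s\<in>F. \<alpha> s \<le> \<beta> s"
    and cov: "{0..T} \<subseteq> (\<Union>s\<in>F. {\<alpha> s..\<beta> s})"
  shows "T \<le> (\<Sum>s\<in>F. \<beta> s - \<alpha> s)"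
proof -
  have "ennreal T = emeasure lborel {0..T}" using T by simp
  also have "\<dots> \<le> emeasure lborel (\<Union>s\<in>F. {\<alpha> s..\<beta> s})"
    by (rule emeasure_mono) (use cov fin in auto)
  also have "\<dots> \<le> (\<Sum>s\<in>F. emeasure lborel {\<alpha> s..\<beta> s})"
    by (rule emeasure_subadditive_finite) (use fin in auto)
  also have "\<dots> = (\<Sum>s\<in>F. ennreal (\<beta> s - \<alpha> s))" using ab by (intro sum.cong) auto
  also have "\<dots> = ennreal (\<Sum>s\<in>F. \<beta> s - \<alpha> s)" by (rule sum_ennreal) (use ab in auto)
  finally show ?thesis
    by (simp add: ennreal_le_iff sum_nonneg ab)
qed


lemma tangent:
  fixes x m c f :: real
  assumes "f - 2 * x > 0" "f - 2 * m > 0" "c + f \<ge> 0"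
  shows "(c + 2 * x) / (f - 2 * x) \<ge> (c + 2 * m) / (f - 2 * m) + 2 * (c + f) / (f - 2 * m)^2 * (x - m)"
proof -
  define A where "A = f - 2 * x"
  define B where "B = f - 2 * m"
  have e1: "(c + 2 * x) / (f - 2 * x) = (c + f) / A - 1" unfolding A_def using assms by (simp add: field_simps)
  have e2: "(c + 2 * m) / (f - 2 * m) = (c + f) / B - 1" unfolding B_def using assms by (simp add: field_simps)
  have e3: "x - m = (B - A) / 2" unfolding A_def B_def by simp
  have A0: "A > 0" "B > 0" using assms A_def B_def by auto
  have "(c + f) / B + 2 * (c + f) / B^2 * ((B - A) / 2) \<le> (c + f) / A"
  proof -
    have "(c + f) * (2 * A * B - A^2) \<le> (c + f) * B^2"
    proof (rule mult_left_mono)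
      show "2 * A * B - A\<^sup>2 \<le> B\<^sup>2" using sum_squares_ge_zero[of 0 "A - B"]
        by (simp add: power2_eq_square algebra_simps)
    qed (use assms in simp)
    then have "(c + f) * (2 * A * B - A^2) / (A * B^2) \<le> (c + f) * B^2 / (A * B^2)"
      using A0 by (intro divide_right_mono) auto
    moreover have "(c + f) / B + 2 * (c + f) / B^2 * ((B - A) / 2) = (c + f) * (2 * A * B - A^2) / (A * B^2)"
      using A0 by (simp add: field_simps power2_eq_square)
    moreover have "(c + f) * B^2 / (A * B^2) = (c + f) / A" using A0 by (simp add: field_simps power2_eq_square)
    ultimately show ?thesis by simp
  qed
  moreover have "2 * (c + f) / (f - 2 * m)^2 * (x - m) = 2 * (c + f) / B^2 * ((B - A) / 2)"
    unfolding A_def B_def using assms by (simp add: field_simps)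
  ultimately show ?thesis using e1 e2 by linarith
qed


definition loc :: "uav_plan \<Rightarrow> nat \<Rightarrow> nat" where "loc P k = fst (the (snd P k))"
definition arr :: "uav_plan \<Rightarrow> nat \<Rightarrow> real" where "arr P k = fst (snd (the (snd P k)))"
definition lea :: "uav_plan \<Rightarrow> nat \<Rightarrow> real" where "lea P k = snd (snd (the (snd P k)))"
definition st where "st g P k = arr P k - g (loc P k)"
definition en where "en g c P k = lea P k + g (loc P k) + c"

lemma vbasic:
  assumes V: "valid_uav g f c N P" and S: "snd P k \<noteq> None"
  shows "loc P k < N \<and> arr P k \<le> lea P k \<and>
     (if k = 0 \<and> fst P then arr P k = 0 \<and> lea P k + g (loc P k) \<le> f
      else 0 \<le> arr P k - g (loc P k) \<and> lea P k - arr P k + 2 * g (loc P k) \<le> f)"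
proof -
  obtain i a l where E: "snd P k = Some (i, a, l)" using S by (cases "snd P k") auto
  have "\<forall>k i a l. snd P k = Some (i, a, l) \<longrightarrow>
          i < N \<and> a \<le> l \<and>
          (if k = 0 \<and> fst P then a = 0 \<and> l + g i \<le> f
           else 0 \<le> a - g i \<and> (l + g i) - (a - g i) \<le> f)"
    using V unfolding valid_uav_def Let_def by blast
  then have H: "i < N \<and> a \<le> l \<and>
          (if k = 0 \<and> fst P then a = 0 \<and> l + g i \<le> f
           else 0 \<le> a - g i \<and> (l + g i) - (a - g i) \<le> f)" using E by blast
  have L: "loc P k = i" "arr P k = a" "lea P k = l" using E by (auto simp: loc_def arr_def lea_def)
  show ?thesis unfolding L using H by (auto split: if_splits)
qed

lemma vstep:
  assumes V: "valid_uav g f c N P" and S: "snd P (Suc k) \<noteq> None"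
  shows "snd P k \<noteq> None \<and> en g c P k \<le> st g P (Suc k)"
proof -
  have S0: "snd P k \<noteq> None" using V S unfolding valid_uav_def Let_def by auto
  obtain i a l where E: "snd P k = Some (i, a, l)" using S0 by (cases "snd P k") auto
  obtain i' a' l' where E': "snd P (Suc k) = Some (i', a', l')" using S by (cases "snd P (Suc k)") auto
  show ?thesis using V E E' unfolding valid_uav_def Let_def loc_def arr_def lea_def st_def en_def
    by auto
qed

lemma vprefix:
  assumes V: "valid_uav g f c N P" and S: "snd P n \<noteq> None" and "j \<le> n"
  shows "snd P j \<noteq> None"
  using assms(3) S
proof (induction n)
  case 0 then show ?case by simp
next
  case (Suc n)
  then show ?case using vstep[OF V] by (cases "j = Suc n") auto
qed

lemma vtele:
  assumes V: "valid_uav g f c N P" and S: "snd P n \<noteq> None"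
  shows "(\<Sum>j<n. en g c P j - st g P j) \<le> st g P n - st g P 0"
  using S
proof (induction n)
  case 0 then show ?case by simp
next
  case (Suc n)
  then have "snd P n \<noteq> None" "en g c P n \<le> st g P (Suc n)" using vstep[OF V] by auto
  with Suc show ?case by simp
qed

definition rr :: "(nat \<Rightarrow> real) \<Rightarrow> real \<Rightarrow> real \<Rightarrow> nat \<Rightarrow> real" where
  "rr g f c i = (c + 2 * g i) / (f - 2 * g i)"

locale setting =
  fixes g :: "nat \<Rightarrow> real" and f c :: real and N :: nat
  assumes fpos: "f > 0" and cnn: "c \<ge> 0" and gpos: "\<forall>i<N. g i > 0"
    and gf: "\<forall>i<N. 2 * g i < f"
begin

definition EE where "EE = (\<Sum>i<N. rr g f c i * g i)"

lemma rr_nn: "i < N \<Longrightarrow> rr g f c i \<ge> 0"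
  using gpos gf cnn unfolding rr_def by (auto intro!: divide_nonneg_pos)

lemma rr_mul: "i < N \<Longrightarrow> rr g f c i * (f - 2 * g i) = c + 2 * g i"
  using gf unfolding rr_def by auto

lemma rrg_le: "i < N \<Longrightarrow> rr g f c i * g i \<le> EE"
  unfolding EE_def
  by (rule member_le_sum[where f="\<lambda>i. rr g f c i * g i"]) (use rr_nn gpos in \<open>auto intro: mult_nonneg_nonneg less_imp_le\<close>)

lemma EE_nn: "EE \<ge> 0"
  unfolding EE_def
  by (intro sum_nonneg mult_nonneg_nonneg) (use rr_nn gpos in \<open>auto intro: less_imp_le\<close>)

lemma vst:
  assumes V: "valid_uav g f c N P" and S: "snd P k \<noteq> None"
  shows "st g P k \<ge> - f / 2"
proof -
  have B: "loc P k < N \<and> arr P k \<le> lea P k \<and>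
     (if k = 0 \<and> fst P then arr P k = 0 \<and> lea P k + g (loc P k) \<le> f
      else 0 \<le> arr P k - g (loc P k) \<and> lea P k - arr P k + 2 * g (loc P k) \<le> f)"
    by (rule vbasic[OF V S])
  have "2 * g (loc P k) < f" using gf B by auto
  then show ?thesis using B fpos unfolding st_def by (auto split: if_splits)
qed

lemma vdiff:
  assumes V: "valid_uav g f c N P" and S: "snd P k \<noteq> None"
  shows "en g c P k - st g P k \<ge> 2 * g (loc P k)" "en g c P k - st g P k \<le> 2 * f + c"
proof -
  have B: "loc P k < N \<and> arr P k \<le> lea P k \<and>
     (if k = 0 \<and> fst P then arr P k = 0 \<and> lea P k + g (loc P k) \<le> f
      else 0 \<le> arr P k - g (loc P k) \<and> lea P k - arr P k + 2 * g (loc P k) \<le> f)"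
    by (rule vbasic[OF V S])
  have "2 * g (loc P k) < f" "g (loc P k) > 0" using gf gpos B by auto
  then show "en g c P k - st g P k \<ge> 2 * g (loc P k)" "en g c P k - st g P k \<le> 2 * f + c"
    using B cnn unfolding st_def en_def by (auto split: if_splits)
qed

lemma vsortie:
  assumes V: "valid_uav g f c N P" and S: "snd P k \<noteq> None" and AT: "arr P k \<le> T"
  shows "(1 + rr g f c (loc P k)) * (min (lea P k) T - arr P k)
         \<le> (en g c P k - st g P k) + (if k = 0 then EE else 0)"
proof -
  have B: "loc P k < N \<and> arr P k \<le> lea P k \<and>
     (if k = 0 \<and> fst P then arr P k = 0 \<and> lea P k + g (loc P k) \<le> f
      else 0 \<le> arr P k - g (loc P k) \<and> lea P k - arr P k + 2 * g (loc P k) \<le> f)"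
    by (rule vbasic[OF V S])
  define i where "i = loc P k"
  define x where "x = min (lea P k) T - arr P k"
  have iN: "i < N" using B i_def by simp
  have x0: "0 \<le> x" "x \<le> lea P k - arr P k" using B AT x_def by auto
  have r0: "rr g f c i \<ge> 0" by (rule rr_nn[OF iN])
  have rm: "rr g f c i * (f - 2 * g i) = c + 2 * g i" by (rule rr_mul[OF iN])
  have rg: "rr g f c i * g i \<le> EE" by (rule rrg_le[OF iN])
  have ed: "en g c P k - st g P k = lea P k - arr P k + 2 * g i + c"
    unfolding en_def st_def i_def by simp
  have key: "rr g f c i * x \<le> c + 2 * g i + (if k = 0 then EE else 0)"
  proof (cases "k = 0 \<and> fst P")
    case True
    then have "x \<le> (f - 2 * g i) + g i" using B x0 i_def by auto
    then have "rr g f c i * x \<le> rr g f c i * ((f - 2 * g i) + g i)"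
      using r0 by (simp add: mult_left_mono)
    also have "\<dots> = c + 2 * g i + rr g f c i * g i" using rm by (simp add: algebra_simps)
    finally show ?thesis using rg True by simp
  next
    case False
    then have "x \<le> f - 2 * g i" using B x0 i_def by auto
    then have "rr g f c i * x \<le> rr g f c i * (f - 2 * g i)"
      using r0 by (simp add: mult_left_mono)
    then show ?thesis using rm EE_nn by auto
  qed
  show ?thesis using key x0 ed unfolding i_def[symmetric] x_def[symmetric]
    by (simp add: algebra_simps)
qed


lemma uav_bound:
  assumes V: "valid_uav g f c N P" and N0: "N > 0" and T: "T \<ge> 0"
  defines "K \<equiv> {k. snd P k \<noteq> None \<and> arr P k \<le> T}"
  shows "finite K \<and> (\<Sum>k\<in>K. (1 + rr g f c (loc P k)) * (min (lea P k) T - arr P k))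
           \<le> T + 3 * f + c + EE"
proof -
  define gm where "gm = Min (g ` {..<N})"
  have gm_pos: "gm > 0" unfolding gm_def using N0 gpos by (subst Min_gr_iff) auto
  have gm_le: "\<And>i. i < N \<Longrightarrow> gm \<le> g i" unfolding gm_def by (rule Min_le) auto
  have stT: "\<And>k. k \<in> K \<Longrightarrow> st g P k \<le> T"
  proof -
    fix k assume "k \<in> K"
    then have "snd P k \<noteq> None" "arr P k \<le> T" unfolding K_def by auto
    then show "st g P k \<le> T" using vbasic[OF V] gpos unfolding st_def
      by (metis diff_le_eq le_add_same_cancel1 less_imp_le order_trans)
  qed
  have bnd: "\<And>n. n \<in> K \<Longrightarrow> (\<Sum>j<n. en g c P j - st g P j) \<le> T + f / 2"
  proof -
    fix n assume nK: "n \<in> K"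
    then have Sn: "snd P n \<noteq> None" unfolding K_def by auto
    have S0: "snd P 0 \<noteq> None" using vprefix[OF V Sn] by simp
    have "(\<Sum>j<n. en g c P j - st g P j) \<le> st g P n - st g P 0" by (rule vtele[OF V Sn])
    also have "\<dots> \<le> T + f / 2" using stT[OF nK] vst[OF V S0] by simp
    finally show "(\<Sum>j<n. en g c P j - st g P j) \<le> T + f / 2" .
  qed
  have low: "\<And>n. n \<in> K \<Longrightarrow> real n * (2 * gm) \<le> (\<Sum>j<n. en g c P j - st g P j)"
  proof -
    fix n assume nK: "n \<in> K"
    then have Sn: "snd P n \<noteq> None" unfolding K_def by auto
    have "real n * (2 * gm) = (\<Sum>j<n. 2 * gm)" by simp
    also have "\<dots> \<le> (\<Sum>j<n. en g c P j - st g P j)"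
    proof (rule sum_mono)
      fix j assume "j \<in> {..<n}"
      then have Sj: "snd P j \<noteq> None" using vprefix[OF V Sn] by auto
      have "loc P j < N" using vbasic[OF V Sj] by simp
      then show "2 * gm \<le> en g c P j - st g P j" using vdiff(1)[OF V Sj] gm_le by force
    qed
    finally show "real n * (2 * gm) \<le> (\<Sum>j<n. en g c P j - st g P j)" .
  qed
  have fin: "finite K"
  proof (rule finite_subset)
    show "K \<subseteq> {..nat \<lceil>(T + f) / (2 * gm)\<rceil>}"
    proof
      fix n assume nK: "n \<in> K"
      have "real n * (2 * gm) \<le> T + f / 2" using low[OF nK] bnd[OF nK] by linarith
      then have "real n \<le> (T + f) / (2 * gm)" using gm_pos fpos
        by (simp add: pos_le_divide_eq)
      then have "real n \<le> of_int \<lceil>(T + f) / (2 * gm)\<rceil>"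
        using le_of_int_ceiling order_trans by blast
      then have "int n \<le> \<lceil>(T + f) / (2 * gm)\<rceil>"
        by (metis of_int_of_nat_eq of_int_le_iff)
      then show "n \<in> {..nat \<lceil>(T + f) / (2 * gm)\<rceil>}" by simp
    qed
  qed simp
  show ?thesis
  proof (cases "K = {}")
    case True then show ?thesis using fpos cnn EE_nn T by simp
  next
    case False
    define n where "n = Max K"
    have nK: "n \<in> K" unfolding n_def using fin False by simp
    have Kn: "K \<subseteq> {..n}" unfolding n_def using fin by auto
    have Sn: "snd P n \<noteq> None" using nK unfolding K_def by auto
    have "(\<Sum>k\<in>K. (1 + rr g f c (loc P k)) * (min (lea P k) T - arr P k))
        \<le> (\<Sum>k\<in>K. (en g c P k - st g P k) + (if k = 0 then EE else 0))"
      by (rule sum_mono) (use vsortie[OF V] in \<open>auto simp: K_def\<close>)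
    also have "\<dots> = (\<Sum>k\<in>K. en g c P k - st g P k) + (\<Sum>k\<in>K. (if k = 0 then EE else 0))"
      by (rule sum.distrib)
    also have "(\<Sum>k\<in>K. (if k = 0 then EE else 0)) \<le> EE"
      using fin EE_nn by (simp add: sum.delta)
    also have "(\<Sum>k\<in>K. en g c P k - st g P k) \<le> (\<Sum>k\<in>{..n}. en g c P k - st g P k)"
    proof (rule sum_mono2)
      fix k assume "k \<in> {..n} - K"
      then have "snd P k \<noteq> None" using vprefix[OF V Sn] by auto
      then show "0 \<le> en g c P k - st g P k" using vdiff(1)[OF V] vbasic[OF V] gpos
        by (meson less_imp_le order_trans zero_le_mult_iff zero_le_numeral)
    qed (use Kn in auto)
    also have "(\<Sum>k\<in>{..n}. en g c P k - st g P k)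
        = (\<Sum>k<n. en g c P k - st g P k) + (en g c P n - st g P n)"
      by (simp add: lessThan_Suc_atMost[symmetric])
    also have "\<dots> \<le> (T + f / 2) + (2 * f + c)" using bnd[OF nK] vdiff(2)[OF V Sn] by linarith
    finally show ?thesis using fin fpos by simp
  qed
qed

end


theorem theorem5:
  fixes N M :: nat and f c :: real and g :: "nat \<Rightarrow> real"
    and U :: "nat \<Rightarrow> uav_plan"
  assumes "f > 0" and "c \<ge> 0"
    and "\<forall>i<N. g i > 0" and "\<forall>i<N. 2 * g i < f"
    and "feasible g f c N M U"
  shows "M \<ge> M_hom f c N ((\<Sum>i<N. g i) / real N)"
proof (cases "N = 0")
  case True then show ?thesis by (simp add: M_hom_def)
next
  case False
  then have N0: "N > 0" by simp
  interpret setting g f c N using assms by unfold_locales auto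
  have V: "\<And>u. u < M \<Longrightarrow> valid_uav g f c N (U u)" using assms(5) unfolding feasible_def by auto
  have COV: "\<forall>i<N. \<forall>t\<ge>0. \<exists>u<M. present (U u) i t" using assms(5) unfolding feasible_def by auto
  define m where "m = (\<Sum>i<N. g i) / real N"
  define rm where "rm = (c + 2 * m) / (f - 2 * m)"
  define C where "C = 3 * f + c + EE"
  have C0: "C \<ge> 0" unfolding C_def using fpos cnn EE_nn by simp
  have m_lt: "f - 2 * m > 0"
  proof -
    have "(\<Sum>i<N. 2 * g i) < (\<Sum>i<N. f)" using N0 gf by (intro sum_strict_mono) auto
    then have "2 * (\<Sum>i<N. g i) < real N * f" by (simp add: sum_distrib_left)
    then show ?thesis unfolding m_def using N0 by (simp add: field_simps)
  qed
  have rm0: "rm \<ge> 0"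
  proof -
    have "m \<ge> 0" unfolding m_def
      by (intro divide_nonneg_nonneg sum_nonneg) (use gpos in \<open>auto intro: less_imp_le\<close>)
    then show ?thesis unfolding rm_def using m_lt cnn by (simp add: divide_nonneg_pos)
  qed
  have jensen: "real N * rm \<le> (\<Sum>i<N. rr g f c i)"
  proof -
    define D where "D = 2 * (c + f) / (f - 2 * m)^2"
    have "(\<Sum>i<N. rm + D * (g i - m)) \<le> (\<Sum>i<N. rr g f c i)"
    proof (rule sum_mono)
      fix i assume "i \<in> {..<N}"
      then have "f - 2 * g i > 0" using gf by auto
      then show "rm + D * (g i - m) \<le> rr g f c i"
        unfolding rm_def D_def rr_def using tangent[of f "g i" m c] m_lt fpos cnn by simp
    qed
    moreover have "(\<Sum>i<N. rm + D * (g i - m)) = real N * rm + D * ((\<Sum>i<N. g i) - real N * m)"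
      by (simp add: sum.distrib sum_distrib_left sum_subtractf algebra_simps)
    moreover have "(\<Sum>i<N. g i) - real N * m = 0" unfolding m_def using N0 by simp
    ultimately show ?thesis by simp
  qed
  have main: "T * (real N + (\<Sum>i<N. rr g f c i)) \<le> real M * (T + C)" if T: "T \<ge> 0" for T
  proof -
    define K where "K u = {k. snd (U u) k \<noteq> None \<and> arr (U u) k \<le> T}" for u
    define \<phi> where "\<phi> u k = (1 + rr g f c (loc (U u) k)) * (min (lea (U u) k) T - arr (U u) k)" for u k
    define S where "S = Sigma {..<M} K"
    define lc where "lc = (\<lambda>(u, k). loc (U u) k)"
    have UB: "\<And>u. u < M \<Longrightarrow> finite (K u) \<and> (\<Sum>k\<in>K u. \<phi> u k) \<le> T + C"
      unfolding K_def \<phi>_def C_def using uav_bound[OF V N0 T] by (simp add: add.assoc)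
    have finS: "finite S" unfolding S_def using UB by auto
    have "(\<Sum>(u, k)\<in>S. \<phi> u k) = (\<Sum>u<M. \<Sum>k\<in>K u. \<phi> u k)"
      unfolding S_def by (rule sum.Sigma[symmetric]) (use UB in auto)
    also have "\<dots> \<le> (\<Sum>u<M. T + C)" by (rule sum_mono) (use UB in auto)
    also have "\<dots> = real M * (T + C)" by simp
    finally have up: "(\<Sum>(u, k)\<in>S. \<phi> u k) \<le> real M * (T + C)" .
    have Sprop: "\<And>u k. (u, k) \<in> S \<Longrightarrow> u < M \<and> snd (U u) k \<noteq> None \<and> arr (U u) k \<le> T"
      unfolding S_def K_def by auto
    have img: "lc ` S \<subseteq> {..<N}"
    proof
      fix y assume "y \<in> lc ` S"
      then obtain u k where uk: "(u, k) \<in> S" "y = loc (U u) k" unfolding lc_def by auto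
      then show "y \<in> {..<N}" using vbasic[OF V] Sprop[OF uk(1)] by auto
    qed
    have "(\<Sum>(u, k)\<in>S. \<phi> u k) = (\<Sum>i<N. \<Sum>s\<in>{s. s \<in> S \<and> lc s = i}. (\<lambda>(u, k). \<phi> u k) s)"
      by (rule sum.group[symmetric]) (use finS img in auto)
    also have "\<dots> \<ge> (\<Sum>i<N. (1 + rr g f c i) * T)"
    proof (rule sum_mono)
      fix i assume iN: "i \<in> {..<N}"
      define Si where "Si = {s. s \<in> S \<and> lc s = i}"
      define \<alpha> where "\<alpha> = (\<lambda>(u, k). arr (U u) k)"
      define \<beta> where "\<beta> = (\<lambda>(u, k). min (lea (U u) k) T)"
      have finSi: "finite Si" unfolding Si_def using finS by simp
      have ab: "\<forall>s\<in>Si. \<alpha> s \<le> \<beta> s"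
      proof
        fix s assume "s \<in> Si"
        then obtain u k where uk: "s = (u, k)" "(u, k) \<in> S" unfolding Si_def by (cases s) auto
        then show "\<alpha> s \<le> \<beta> s" unfolding \<alpha>_def \<beta>_def using Sprop[OF uk(2)] vbasic[OF V] by auto
      qed
      have cov: "{0..T} \<subseteq> (\<Union>s\<in>Si. {\<alpha> s..\<beta> s})"
      proof
        fix t assume t: "t \<in> {0..T}"
        then obtain u where u: "u < M" "present (U u) i t" using COV iN by auto
        then obtain k a l where kal: "snd (U u) k = Some (i, a, l)" "a \<le> t" "t \<le> l"
          unfolding present_def by auto
        have L: "loc (U u) k = i" "arr (U u) k = a" "lea (U u) k = l"
          using kal by (auto simp: loc_def arr_def lea_def)
        have "(u, k) \<in> Si" unfolding Si_def S_def K_def lc_def using u kal t L by auto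
        moreover have "t \<in> {\<alpha> (u, k)..\<beta> (u, k)}" unfolding \<alpha>_def \<beta>_def using L kal t by auto
        ultimately show "t \<in> (\<Union>s\<in>Si. {\<alpha> s..\<beta> s})" by blast
      qed
      have "T \<le> (\<Sum>s\<in>Si. \<beta> s - \<alpha> s)" by (rule cover_len[OF finSi T ab cov])
      then have "(1 + rr g f c i) * T \<le> (1 + rr g f c i) * (\<Sum>s\<in>Si. \<beta> s - \<alpha> s)"
        using rr_nn iN by (intro mult_left_mono) auto
      also have "\<dots> = (\<Sum>s\<in>Si. (\<lambda>(u, k). \<phi> u k) s)"
        unfolding sum_distrib_left
      proof (rule sum.cong)
        fix s assume "s \<in> Si"
        then obtain u k where uk: "s = (u, k)" "lc (u, k) = i" unfolding Si_def by (cases s) auto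
        then show "(1 + rr g f c i) * (\<beta> s - \<alpha> s) = (\<lambda>(u, k). \<phi> u k) s"
          unfolding \<alpha>_def \<beta>_def \<phi>_def lc_def by simp
      qed simp
      finally show "(1 + rr g f c i) * T \<le> (\<Sum>s\<in>{s. s \<in> S \<and> lc s = i}. (\<lambda>(u, k). \<phi> u k) s)"
        unfolding Si_def .
    qed
    finally have low: "(\<Sum>i<N. (1 + rr g f c i) * T) \<le> (\<Sum>(u, k)\<in>S. \<phi> u k)" .
    have "T * (real N + (\<Sum>i<N. rr g f c i)) = (\<Sum>i<N. (1 + rr g f c i) * T)"
      by (simp add: sum.distrib sum_distrib_right sum_distrib_left algebra_simps)
    then show ?thesis using low up by linarith
  qed
  define X where "X = real N + real N * rm"
  have main2: "T * X \<le> real M * (T + C)" if "T \<ge> 0" for T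
  proof -
    have "T * X \<le> T * (real N + (\<Sum>i<N. rr g f c i))"
      unfolding X_def using jensen that by (intro mult_left_mono) auto
    also have "\<dots> \<le> real M * (T + C)" by (rule main[OF that])
    finally show ?thesis .
  qed
  have MX: "real M \<ge> X"
  proof (rule ccontr)
    assume "\<not> real M \<ge> X"
    then have d: "X - real M > 0" by simp
    define T where "T = real M * C / (X - real M) + 1"
    have T0: "T \<ge> 0" unfolding T_def using C0 d by simp
    have "T * X \<le> real M * (T + C)" by (rule main2[OF T0])
    then have "T * (X - real M) \<le> real M * C" by (simp add: algebra_simps)
    moreover have "T * (X - real M) = real M * C + (X - real M)"
      unfolding T_def using d by (simp add: field_simps)
    ultimately show False using d by simp
  qed
  have "rm * real N \<le> real M - real N" using MX unfolding X_def by (simp add: algebra_simps)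
  then have "\<lceil>rm * real N\<rceil> \<le> int M - int N" by (intro ceiling_le) simp
  moreover have "\<lceil>rm * real N\<rceil> \<ge> 0" using mult_nonneg_nonneg[OF rm0, of "real N"] by simp
  ultimately have "int (N + nat \<lceil>rm * real N\<rceil>) \<le> int M" by simp
  then have "N + nat \<lceil>rm * real N\<rceil> \<le> M" by (simp only: of_nat_le_iff)
  then show ?thesis unfolding M_hom_def rm_def m_def .
qed

end
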